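(* Let $G_s$ be a causal DAG over observed variables $V$ (with treatment $X\in V$ and outcome $Y\in V$), augmented with a binary selection node $S$, and let $T(G_s)$ be its twin network (defined in the context) with the counterfactual treatment node $X^*$ intervened on. If $S \perp\!\!\!\perp Y^*_{X^*}$, i.e. $S$ and $Y^*_{X^*}$ are d-separated given the empty set in $T(G_s)$, then the experimental distribution $P(Y^*_{X^*})$ is naturally experimental s-recoverable in $G_s$.
   Context: Selection-augmented graph: $G_s$ is a causal DAG over observed variables $V$ together with an additional binary node $S$ ($S=1$ means the unit is included in the sample, $S=0$ excluded), with directed edges into $S$ from the variables that influence sample inclusion. $G_s$ is read as a structural causal model in which each endogenous node $V_i$ (including $S$) has its own exogenous variable $U_{V_i}$. Twin network $T(G_s)$: take $G_s$ with its exogenous variables, add a counterfactual copy $V_i^*$ of each endogenous node $V_i$ (including a copy $S^*$ of $S$) with the same edges among the copies as among the originals, and let each copy $V_i^*$ share the exogenous parent $U_{V_i}$ of $V_i$; then remove all edges entering the counterfactual treatment node $X^*$ (intervention $do(X^*=x)$). $Y^*_{X^*}$ denotes the counterfactual outcome node in this network, and $P(Y^*_{X^*=x}=y)=P(Y=y\mid do(X=x))$ is the experimental (interventional) distribution. Independence statements between $S$ and $Y^*_{X^*}$ are understood as d-separation statements in $T(G_s)$. Natural experimental s-recoverability: $P(Y^*_{X^*})$ is naturally (experimental) s-recoverable in $G_s$ if for every experimental distribution compatible with $G_s$, $P(Y^*_{X^*}\mid S=1)=P(Y^*_{X^*})>0$. *)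

theory Defs
  imports "HOL-Probability.Probability"
begin

text \<open>A directed graph is given by its edge relation E; (a,b) \<in> E means a \<rightarrow> b.\<close>

definition graph_path :: "('a \<times> 'a) set \<Rightarrow> 'a list \<Rightarrow> bool" where
  "graph_path E p \<longleftrightarrow> p \<noteq> [] \<and> distinct p \<and>
     (\<forall>i. Suc i < length p \<longrightarrow> (p ! i, p ! Suc i) \<in> E \<or> (p ! Suc i, p ! i) \<in> E)"

definition collider_at :: "('a \<times> 'a) set \<Rightarrow> 'a list \<Rightarrow> nat \<Rightarrow> bool" where
  "collider_at E p i \<longleftrightarrow> (p ! (i - 1), p ! i) \<in> E \<and> (p ! Suc i, p ! i) \<in> E"

definition descendants :: "('a \<times> 'a) set \<Rightarrow> 'a \<Rightarrow> 'a set" where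
  "descendants E v = {w. (v, w) \<in> E\<^sup>*}"

definition path_blocked :: "('a \<times> 'a) set \<Rightarrow> 'a set \<Rightarrow> 'a list \<Rightarrow> bool" where
  "path_blocked E Z p \<longleftrightarrow> (\<exists>i. 0 < i \<and> Suc i < length p \<and>
      ((collider_at E p i \<and> descendants E (p ! i) \<inter> Z = {}) \<or>
       (\<not> collider_at E p i \<and> p ! i \<in> Z)))"

definition d_separated :: "('a \<times> 'a) set \<Rightarrow> 'a set \<Rightarrow> 'a set \<Rightarrow> 'a set \<Rightarrow> bool" where
  "d_separated E A B Z \<longleftrightarrow>
     (\<forall>p. graph_path E p \<and> hd p \<in> A \<and> last p \<in> B \<longrightarrow> path_blocked E Z p)"

text \<open>Nodes of the twin network: factual copy, counterfactual copy, and the (shared)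
  exogenous parent of each endogenous node.\<close>
datatype 'n tnode = Fac 'n | Cf 'n | Ex 'n

definition twin_edges :: "'n set \<Rightarrow> ('n \<times> 'n) set \<Rightarrow> 'n \<Rightarrow> ('n tnode \<times> 'n tnode) set" where
  "twin_edges N E X =
      {(Fac j, Fac i) | j i. (j, i) \<in> E}
    \<union> {(Cf j, Cf i) | j i. (j, i) \<in> E \<and> i \<noteq> X}
    \<union> {(Ex i, Fac i) | i. i \<in> N}
    \<union> {(Ex i, Cf i) | i. i \<in> N \<and> i \<noteq> X}"

text \<open>f i v u: structural function of endogenous node i, applied to the values v of the
  endogenous variables and the value u of its own exogenous variable U_i.\<close>

definition scm_compatible ::
  "'n set \<Rightarrow> ('n \<times> 'n) set \<Rightarrow> 'n \<Rightarrow> ('n \<Rightarrow> ('n \<Rightarrow> 'val::zero_neq_one) \<Rightarrow> 'u \<Rightarrow> 'val) \<Rightarrow> bool" where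
  "scm_compatible N E S f \<longleftrightarrow>
     (\<forall>i\<in>N. \<forall>v v' u. (\<forall>j. (j, i) \<in> E \<longrightarrow> v j = v' j) \<longrightarrow> f i v u = f i v' u) \<and>
     (\<forall>v u. f S v u \<in> {0, 1})"

text \<open>The (unique, by acyclicity) solution of the structural equations for exogenous
  values u, under the intervention given by the partial map dom_int (nodes with dom_int i = Some x
  are set to x).\<close>
definition scm_solve ::
  "'n set \<Rightarrow> ('n \<Rightarrow> ('n \<Rightarrow> 'val) \<Rightarrow> 'u \<Rightarrow> 'val) \<Rightarrow> ('n \<Rightarrow> 'val option) \<Rightarrow> ('n \<Rightarrow> 'u) \<Rightarrow> ('n \<Rightarrow> 'val)" where
  "scm_solve N f dom_int u = (THE v. (\<forall>i. i \<notin> N \<longrightarrow> v i = undefined) \<and>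
      (\<forall>i\<in>N. v i = (case dom_int i of Some x \<Rightarrow> x | None \<Rightarrow> f i v (u i))))"

text \<open>Joint distribution of the factual world and the counterfactual world under do(X = x),
  sharing the mutually independent exogenous variables (distributions PU).\<close>
definition twin_dist ::
  "'n set \<Rightarrow> ('n \<Rightarrow> ('n \<Rightarrow> 'val) \<Rightarrow> 'u \<Rightarrow> 'val) \<Rightarrow> ('n \<Rightarrow> 'u pmf) \<Rightarrow> 'n \<Rightarrow> 'val
     \<Rightarrow> (('n \<Rightarrow> 'val) \<times> ('n \<Rightarrow> 'val)) pmf" where
  "twin_dist N f PU X x = map_pmf (\<lambda>u. (scm_solve N f Map.empty u, scm_solve N f [X \<mapsto> x] u))
       (Pi_pmf N undefined PU)"

end

theory Submission imports Defs "HOL-Library.Transitive_Closure_Table" begin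

definition is_sol :: "'n set \<Rightarrow> ('n \<Rightarrow> ('n \<Rightarrow> 'val) \<Rightarrow> 'u \<Rightarrow> 'val) \<Rightarrow> ('n \<Rightarrow> 'val option) \<Rightarrow> ('n \<Rightarrow> 'u) \<Rightarrow> ('n \<Rightarrow> 'val) \<Rightarrow> bool" where
  "is_sol N f d u v \<longleftrightarrow> (\<forall>i. i \<notin> N \<longrightarrow> v i = undefined) \<and>
      (\<forall>i\<in>N. v i = (case d i of Some x \<Rightarrow> x | None \<Rightarrow> f i v (u i)))"

definition Hs where
  "Hs N f d u = (\<lambda>g i. if i \<in> N then (case d i of Some x \<Rightarrow> x | None \<Rightarrow> f i g (u i)) else undefined)"

lemma sol_exists:
  assumes wf: "wf E" and loc: "\<forall>i\<in>N. \<forall>v v' u. (\<forall>j. (j, i) \<in> E \<longrightarrow> v j = v' j) \<longrightarrow> f i v u = f i v' u"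
  shows "is_sol N f d u (wfrec E (Hs N f d u))"
proof -
  let ?s = "wfrec E (Hs N f d u)"
  have eq: "?s i = Hs N f d u (cut ?s E i) i" for i by (rule wfrec[OF wf])
  show ?thesis unfolding is_sol_def
  proof (intro conjI allI impI ballI)
    fix i assume "i \<notin> N" then show "?s i = undefined" using eq[of i] by (simp add: Hs_def)
  next
    fix i assume iN: "i \<in> N"
    have "f i (cut ?s E i) (u i) = f i ?s (u i)"
      using loc iN by (auto simp: cut_def)
    then show "?s i = (case d i of Some x \<Rightarrow> x | None \<Rightarrow> f i ?s (u i))"
      using eq[of i] iN by (simp add: Hs_def split: option.splits)
  qed
qed

lemma sol_local:
  assumes wf: "wf E" and loc: "\<forall>i\<in>N. \<forall>v v' u. (\<forall>j. (j, i) \<in> E \<longrightarrow> v j = v' j) \<longrightarrow> f i v u = f i v' u"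
    and s1: "is_sol N f d u v" and s2: "is_sol N f d u' v'"
  shows "(\<forall>j\<in>N. (j, i) \<in> {(a,b). (a,b)\<in>E \<and> d b = None}\<^sup>* \<and> d j = None \<longrightarrow> u j = u' j) \<Longrightarrow> v i = v' i"
  using wf
proof (induction i rule: wf_induct_rule)
  case (less i)
  show ?case
  proof (cases "i \<in> N")
    case False then show ?thesis using s1 s2 by (simp add: is_sol_def)
  next
    case iN: True
    show ?thesis
    proof (cases "d i")
      case (Some x) then show ?thesis using s1 s2 iN by (simp add: is_sol_def)
    next
      case None
      have ui: "u i = u' i" using less.prems iN None by auto
      have par: "v j = v' j" if "(j,i) \<in> E" for j
      proof (rule less.IH[OF that], intro ballI impI)
        fix k assume "k \<in> N" "(k, j) \<in> {(a,b). (a,b)\<in>E \<and> d b = None}\<^sup>* \<and> d k = None"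
        moreover have "(j, i) \<in> {(a,b). (a,b)\<in>E \<and> d b = None}" using that None by auto
        ultimately show "u k = u' k" using less.prems
          by (meson rtrancl.rtrancl_into_rtrancl)
      qed
      have "f i v (u i) = f i v' (u' i)" using loc iN par ui by metis
      then show ?thesis using s1 s2 iN None by (simp add: is_sol_def)
    qed
  qed
qed

lemma sol_unique:
  assumes wf: "wf E" and loc: "\<forall>i\<in>N. \<forall>v v' u. (\<forall>j. (j, i) \<in> E \<longrightarrow> v j = v' j) \<longrightarrow> f i v u = f i v' u"
    and s1: "is_sol N f d u v" and s2: "is_sol N f d u v'"
  shows "v = v'"
  using sol_local[OF wf loc s1 s2] by blast

lemma solve_is_sol:
  assumes wf: "wf E" and loc: "\<forall>i\<in>N. \<forall>v v' u. (\<forall>j. (j, i) \<in> E \<longrightarrow> v j = v' j) \<longrightarrow> f i v u = f i v' u"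
  shows "is_sol N f d u (scm_solve N f d u)"
proof -
  have "scm_solve N f d u = wfrec E (Hs N f d u)"
    unfolding scm_solve_def
    apply (rule the_equality)
     apply (fold is_sol_def, rule sol_exists[OF wf loc])
    using sol_unique[OF wf loc _ sol_exists[OF wf loc]] by blast
  then show ?thesis using sol_exists[OF wf loc] by simp
qed

lemma gen_path:
  assumes "(a,b) \<in> R\<^sup>*"
  shows "\<exists>p. p \<noteq> [] \<and> distinct p \<and> hd p = a \<and> last p = b \<and> (\<forall>i. Suc i < length p \<longrightarrow> (p!i, p!Suc i) \<in> R)"
proof -
  have "(\<lambda>x y. (x,y)\<in>R)\<^sup>*\<^sup>* a b" using assms by (simp add: rtrancl_def)
  then obtain xs where "rtrancl_path (\<lambda>x y. (x,y)\<in>R) a xs b" by (auto simp: rtranclp_eq_rtrancl_path)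
  then obtain ys where p: "rtrancl_path (\<lambda>x y. (x,y)\<in>R) a ys b" and d: "distinct (a # ys)"
    by (rule rtrancl_path_distinct)
  have "last (x # zs) = z \<and> (\<forall>i. Suc i < length (x#zs) \<longrightarrow> ((x#zs)!i, (x#zs)!Suc i) \<in> R)"
    if "rtrancl_path (\<lambda>x y. (x,y)\<in>R) x zs z" for x zs z
    using that
  proof (induction)
    case (base x) then show ?case by simp
  next
    case (step x y ys z)
    show ?case
    proof (intro conjI allI impI)
      show "last (x # y # ys) = z" using step by simp
      fix i assume "Suc i < length (x # y # ys)"
      then show "((x # y # ys) ! i, (x # y # ys) ! Suc i) \<in> R"
        using step by (cases i) auto
    qed
  qed
  from this[OF p] d show ?thesis by (intro exI[of _ "a # ys"]) auto
qed


lemma twin_no2: assumes ac: "acyclic E" and "(a,b) \<in> twin_edges N E X" "(b,a) \<in> twin_edges N E X"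
  shows False
proof -
  have "\<exists>i j. (i,j)\<in>E \<and> (j,i) \<in> E" using assms(2,3) unfolding twin_edges_def by auto
  then obtain i j where "(i,j)\<in>E" "(j,i)\<in>E" by blast
  then have "(i,i) \<in> E\<^sup>+" by (meson trancl.r_into_trancl trancl_into_trancl)
  with ac show False by (simp add: acyclic_def)
qed

lemma twin_noEx: "(a, Ex j) \<notin> twin_edges N E X"
  unfolding twin_edges_def by auto

lemma disj:
  assumes ac: "acyclic E" and jN: "j \<in> N" and jX: "j \<noteq> X"
    and jS: "(j,S) \<in> E\<^sup>*" and jY: "(j,Y) \<in> {(a,b). (a,b)\<in>E \<and> b \<noteq> X}\<^sup>*"
    and dsep: "d_separated (twin_edges N E X) {Fac S} {Cf Y} {}"
  shows False
proof -
  let ?T = "twin_edges N E X"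
  have "(S,j) \<in> (E\<inverse>)\<^sup>*" using jS by (simp add: rtrancl_converse)
  from gen_path[OF this] obtain ps where ps: "ps \<noteq> []" "distinct ps" "hd ps = S" "last ps = j"
    "\<forall>i. Suc i < length ps \<longrightarrow> (ps!Suc i, ps!i) \<in> E" by auto
  from gen_path[OF jY] obtain qs where qs: "qs \<noteq> []" "distinct qs" "hd qs = j" "last qs = Y"
    "\<forall>i. Suc i < length qs \<longrightarrow> (qs!i, qs!Suc i) \<in> E \<and> qs!Suc i \<noteq> X" by auto
  define k where "k = length ps"
  define P where "P = map Fac ps @ Ex j # map Cf qs"
  have lenP: "length P = k + 1 + length qs" unfolding P_def k_def by simp
  have k0: "0 < k" using ps(1) k_def by simp
  have orient: "if i < k then (P!Suc i, P!i) \<in> ?T else (P!i, P!Suc i) \<in> ?T" if i: "Suc i < length P" for i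
  proof -
    consider "Suc i < k" | "Suc i = k" | "i = k" | m where "i = Suc k + m" using not_less_eq
      by (metis add_Suc less_imp_Suc_add linorder_neqE_nat)
    then show ?thesis
    proof cases
      case 1
      then have "(ps!Suc i, ps!i) \<in> E" using ps(5) k_def by auto
      then show ?thesis using 1 unfolding P_def twin_edges_def by (auto simp: nth_append k_def)
    next
      case 2
      have "ps ! i = j" using ps(1,4) 2 k_def by (metis diff_Suc_1 last_conv_nth)
      then show ?thesis using 2 jN unfolding P_def twin_edges_def by (auto simp: nth_append k_def)
    next
      case 3
      have "qs ! 0 = j" using qs(1,3) by (simp add: hd_conv_nth)
      then show ?thesis using 3 jN jX qs(1) unfolding P_def twin_edges_def by (auto simp: nth_append k_def)
    next
      case 4
      then have "Suc m < length qs" using i lenP by simp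
      moreover have "(qs!m, qs!Suc m) \<in> E \<and> qs!Suc m \<noteq> X" using qs(5) calculation by auto
      ultimately show ?thesis using 4 unfolding P_def twin_edges_def by (auto simp: nth_append k_def)
    qed
  qed
  have gp: "graph_path ?T P"
    unfolding graph_path_def
  proof (intro conjI allI impI)
    show "P \<noteq> []" unfolding P_def by simp
    show "distinct P" unfolding P_def using ps(2) qs(2) by (auto simp: distinct_map inj_on_def)
    fix i assume "Suc i < length P"
    from orient[OF this] show "(P ! i, P ! Suc i) \<in> ?T \<or> (P ! Suc i, P ! i) \<in> ?T"
      by (auto split: if_splits)
  qed
  have hdP: "hd P = Fac S" unfolding P_def using ps(1,3) by (simp add: hd_map)
  have lastP: "last P = Cf Y" unfolding P_def using qs(1,4) by (simp add: last_map)
  have "\<not> path_blocked ?T {} P"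
    unfolding path_blocked_def
  proof clarsimp
    fix i assume i0: "0 < i" and il: "Suc i < length P" and col: "collider_at ?T P i"
    have c1: "(P!(i-1), P!i) \<in> ?T" and c2: "(P!Suc i, P!i) \<in> ?T" using col by (auto simp: collider_at_def)
    consider "i < k" | "i = k" | "k < i" by linarith
    then show False
    proof cases
      case 1
      have "Suc (i-1) < length P" "i - 1 < k" "Suc (i-1) = i" using 1 il i0 by auto
      then have "(P!i, P!(i-1)) \<in> ?T" using orient[of "i-1"] by auto
      then show False using twin_no2[OF ac] c1 by blast
    next
      case 2
      then have "P ! i = Ex j" unfolding P_def k_def by (simp add: nth_append)
      then show False using c1 twin_noEx by metis
    next
      case 3
      then have "(P!i, P!Suc i) \<in> ?T" using orient[OF il] by auto
      then show False using twin_no2[OF ac] c2 by blast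
    qed
  qed
  then show False using dsep gp hdP lastP unfolding d_separated_def by auto
qed


lemma prob_pair_times:
  "measure_pmf.prob (pair_pmf M1 M2) (X \<times> Y) = measure_pmf.prob M1 X * measure_pmf.prob M2 Y"
proof -
  have "measure_pmf.prob (pair_pmf M1 M2) (X \<times> Y) = measure_pmf.prob (pair_pmf M1 M2) ((X \<times> Y) \<inter> set_pmf (pair_pmf M1 M2))"
    by (rule measure_Int_set_pmf[symmetric])
  also have "(X \<times> Y) \<inter> set_pmf (pair_pmf M1 M2) = (X \<inter> set_pmf M1) \<times> (Y \<inter> set_pmf M2)" by auto
  also have "measure_pmf.prob (pair_pmf M1 M2) \<dots> = measure_pmf.prob M1 (X \<inter> set_pmf M1) * measure_pmf.prob M2 (Y \<inter> set_pmf M2)"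
    by (rule measure_pmf_prob_product) auto
  also have "\<dots> = measure_pmf.prob M1 X * measure_pmf.prob M2 Y" by (simp add: measure_Int_set_pmf)
  finally show ?thesis .
qed

lemma indep_Pi:
  assumes fin: "finite N" and AN: "A \<subseteq> N"
    and q1: "\<And>u u'. (\<forall>j\<in>A. u j = u' j) \<Longrightarrow> Q1 u = Q1 u'"
    and q2: "\<And>u u'. (\<forall>j\<in>N-A. u j = u' j) \<Longrightarrow> Q2 u = Q2 u'"
  shows "measure_pmf.prob (Pi_pmf N dflt p) {u. Q1 u \<and> Q2 u}
       = measure_pmf.prob (Pi_pmf N dflt p) {u. Q1 u} * measure_pmf.prob (Pi_pmf N dflt p) {u. Q2 u}"
proof -
  define h where "h = (\<lambda>(f::'a\<Rightarrow>'b,g) x. if x \<in> A then f x else g x)"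
  define PP where "PP = pair_pmf (Pi_pmf A dflt p) (Pi_pmf (N - A) dflt p)"
  have NN: "N = A \<union> (N - A)" using AN by auto
  have M: "Pi_pmf N dflt p = map_pmf h PP"
    unfolding h_def PP_def
    by (subst NN, rule Pi_pmf_union) (use fin AN finite_subset in auto)
  define c :: "'a \<Rightarrow> 'b" where "c = (\<lambda>_. dflt)"
  have e1: "Q1 (h (f,g)) = Q1 (h (f,c))" for f g by (rule q1) (simp add: h_def)
  have e2: "Q2 (h (f,g)) = Q2 (h (c,g))" for f g by (rule q2) (simp add: h_def)
  have s12: "h -` {u. Q1 u \<and> Q2 u} = {f. Q1 (h (f,c))} \<times> {g. Q2 (h (c,g))}"
    using e1 e2 by auto
  have s1: "h -` {u. Q1 u} = {f. Q1 (h (f,c))} \<times> UNIV"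
    using e1 by auto
  have s2: "h -` {u. Q2 u} = UNIV \<times> {g. Q2 (h (c,g))}"
    using e2 by auto
  show ?thesis unfolding M measure_map_pmf s12 s1 s2 PP_def prob_pair_times by simp
qed


theorem theorem1:
  fixes V :: "'n set" and E :: "('n \<times> 'n) set" and X Y S :: 'n
    and PU :: "'n \<Rightarrow> 'u pmf" and f :: "'n \<Rightarrow> ('n \<Rightarrow> 'val::zero_neq_one) \<Rightarrow> 'u \<Rightarrow> 'val"
  assumes finV: "finite V"
    and S_new: "S \<notin> V" and XV: "X \<in> V" and YV: "Y \<in> V"
    and E_nodes: "E \<subseteq> insert S V \<times> insert S V"
    and dag: "acyclic E"
    and S_sink: "\<forall>j. (S, j) \<notin> E"
    and dsep: "d_separated (twin_edges (insert S V) E X) {Fac S} {Cf Y} {}"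
    and compat: "scm_compatible (insert S V) E S f"
    and sel_pos: "measure_pmf.prob (twin_dist (insert S V) f PU X x) {w. fst w S = 1} > 0"
  shows "measure_pmf.prob (twin_dist (insert S V) f PU X x) {w. fst w S = 1 \<and> snd w Y = y}
           / measure_pmf.prob (twin_dist (insert S V) f PU X x) {w. fst w S = 1}
         = measure_pmf.prob (twin_dist (insert S V) f PU X x) {w. snd w Y = y}"
proof -
  define N where "N = insert S V"
  have finN: "finite N" using finV N_def by simp
  have "finite E" using E_nodes finN N_def by (metis finite_SigmaI finite_subset)
  then have wf: "wf E" using dag by (rule finite_acyclic_wf)
  have loc: "\<forall>i\<in>N. \<forall>v v' u. (\<forall>j. (j, i) \<in> E \<longrightarrow> v j = v' j) \<longrightarrow> f i v u = f i v' u"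
    using compat N_def by (simp add: scm_compatible_def)
  define A where "A = {j\<in>N. (j,S) \<in> E\<^sup>*}"
  define Q1 where "Q1 = (\<lambda>u. scm_solve N f Map.empty u S = 1)"
  define Q2 where "Q2 = (\<lambda>u. scm_solve N f [X \<mapsto> x] u Y = y)"
  define M where "M = Pi_pmf N undefined PU"
  have q1: "Q1 u = Q1 u'" if "\<forall>j\<in>A. u j = u' j" for u u'
  proof -
    have "scm_solve N f Map.empty u S = scm_solve N f Map.empty u' S"
      by (rule sol_local[OF wf loc solve_is_sol[OF wf loc] solve_is_sol[OF wf loc]])
        (use that A_def in auto)
    then show ?thesis by (simp add: Q1_def)
  qed
  have q2: "Q2 u = Q2 u'" if "\<forall>j\<in>N-A. u j = u' j" for u u'
  proof -
    have "scm_solve N f [X \<mapsto> x] u Y = scm_solve N f [X \<mapsto> x] u' Y"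
    proof (rule sol_local[OF wf loc solve_is_sol[OF wf loc] solve_is_sol[OF wf loc]], intro ballI impI)
      fix j assume jN: "j \<in> N" and h: "(j, Y) \<in> {(a, b). (a, b) \<in> E \<and> [X \<mapsto> x] b = None}\<^sup>* \<and> [X \<mapsto> x] j = None"
      have se: "{(a, b). (a, b) \<in> E \<and> [X \<mapsto> x] b = None} = {(a, b). (a, b) \<in> E \<and> b \<noteq> X}" by auto
      from h have jX: "j \<noteq> X" and jY: "(j, Y) \<in> {(a, b). (a, b) \<in> E \<and> b \<noteq> X}\<^sup>*"
        by (auto simp only: se) (auto split: if_splits)
      have "j \<notin> A"
      proof
        assume "j \<in> A"
        then have "(j,S) \<in> E\<^sup>*" by (simp add: A_def)
        from disj[OF dag jN jX this jY] dsep N_def show False by simp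
      qed
      then show "u j = u' j" using that jN by auto
    qed
    then show ?thesis by (simp add: Q2_def)
  qed
  have ind: "measure_pmf.prob M {u. Q1 u \<and> Q2 u} = measure_pmf.prob M {u. Q1 u} * measure_pmf.prob M {u. Q2 u}"
    unfolding M_def by (rule indep_Pi[OF finN _ q1 q2]) (auto simp: A_def)
  have td: "twin_dist (insert S V) f PU X x = map_pmf (\<lambda>u. (scm_solve N f Map.empty u, scm_solve N f [X \<mapsto> x] u)) M"
    by (simp add: twin_dist_def N_def M_def)
  have p12: "measure_pmf.prob (twin_dist (insert S V) f PU X x) {w. fst w S = 1 \<and> snd w Y = y} = measure_pmf.prob M {u. Q1 u \<and> Q2 u}"
    unfolding td measure_map_pmf by (simp add: Q1_def Q2_def vimage_def)
  have p1: "measure_pmf.prob (twin_dist (insert S V) f PU X x) {w. fst w S = 1} = measure_pmf.prob M {u. Q1 u}"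
    unfolding td measure_map_pmf by (simp add: Q1_def vimage_def)
  have p2: "measure_pmf.prob (twin_dist (insert S V) f PU X x) {w. snd w Y = y} = measure_pmf.prob M {u. Q2 u}"
    unfolding td measure_map_pmf by (simp add: Q2_def vimage_def)
  show ?thesis using sel_pos unfolding p12 p1 p2 ind by simp
qed

end
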